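(* Let $n\in\mathbb{N}$ and $d\geq 3$. There exists an injective map $\Phi:\mathcal{P}_{n,d}\to\mathcal{P}_{n(n+1),d-1}$ such that $$\Phi(\mathcal{J}^{\rm lin}_{n,d})=\mathcal{J}^{\rm lin}_{n(n+1),d-1;n}\cap \Phi(\mathcal{P}_{n,d}),\qquad \Phi(\mathcal{J}_{n,d})=\mathcal{J}_{n(n+1),d-1;n}\cap \Phi(\mathcal{P}_{n,d}).$$
   Context: A polynomial system is a map $F:\mathbb{C}^n\to\mathbb{C}^n$ all of whose coordinate functions $F_j$ are polynomials; $\mathcal{P}_n$ denotes the set of these, and $\mathcal{P}_{n,d}$ the subset with total degree $\max_j\deg F_j\leq d$. The Jacobian matrix is $J_F(z)=(\partial F_j/\partial z_i)_{1\le i,j\le n}$. $\mathcal{J}^{\rm lin}_{n}$ is the set of $F\in\mathcal{P}_n$ with $\det J_F(z)=c$ for a constant $c\in\mathbb{C}^\times$ (independent of $z$), and $\mathcal{J}_n$ is the set of $F\in\mathcal{P}_n$ that are bijective with polynomial inverse; $\mathcal{J}^{\rm lin}_{n,d}=\mathcal{J}^{\rm lin}_n\cap\mathcal{P}_{n,d}$, $\mathcal{J}_{n,d}=\mathcal{J}_n\cap\mathcal{P}_{n,d}$. Partial versions: for $0\le n'\le n$ write $z=(z_1,z_2)\in\mathbb{C}^{n'}\times\mathbb{C}^{n-n'}$ and $F=(F_1,F_2)$ accordingly, and set $R(z_2;z_1):=F_2(z_1,z_2)$, viewed as a polynomial system in the variables $z_2\in\mathbb{C}^{n-n'}$ depending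 on the parameters $z_1$. When for each $z_1$ the map $R(\cdot;z_1)$ is in $\mathcal{J}_{n-n'}$, denote by $R^{-1}(\cdot;z_1)$ its inverse, so $R^{-1}(R(z_2;z_1);z_1)=z_2$. - $\mathcal{J}_{n,d;n'}$ is the set of $F\in\mathcal{P}_{n,d}$ such that $R(\cdot;z_1)\in\mathcal{J}_{n-n'}$ for all $z_1\in\mathbb{C}^{n'}$, and such that $F$ restricted to $F^{-1}(\mathbb{C}^{n'}\times\{0\})$ is a bijection onto $\mathbb{C}^{n'}\times\{0\}$ whose inverse $y_1\mapsto F^{-1}(y_1,0)$ is a polynomial map $\mathbb{C}^{n'}\to\mathbb{C}^{n}$. - $\mathcal{J}^{\rm lin}_{n,d;n'}$ is the set of $F\in\mathcal{P}_{n,d}$ such that $R(\cdot;z_1)\in\mathcal{J}_{n-n'}$ for all $z_1\in\mathbb{C}^{n'}$ and there is a constant $c\in\mathbb{C}^\times$ with $\det J_F(z_1,R^{-1}(0;z_1))=c$ for all $z_1\in\mathbb{C}^{n'}$. Here the dimension $n(n+1)$ is split as $n'=n$ first coordinates and $n^2$ remaining coordinates. *)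

theory Defs
  imports Complex_Main "HOL-Analysis.Derivative" "Jordan_Normal_Form.Determinant"
begin

(* Points of C^m are represented as functions nat => complex vanishing at indices >= m. *)
definition Cn :: "nat \<Rightarrow> (nat \<Rightarrow> complex) set" where
  "Cn m = {z. \<forall>i. m \<le> i \<longrightarrow> z i = 0}"

definition exps :: "nat \<Rightarrow> nat \<Rightarrow> (nat \<Rightarrow> nat) set" where
  "exps m d = {\<alpha>. (\<forall>i. m \<le> i \<longrightarrow> \<alpha> i = 0) \<and> (\<Sum>i<m. \<alpha> i) \<le> d}"

definition polyfun :: "nat \<Rightarrow> nat \<Rightarrow> ((nat \<Rightarrow> complex) \<Rightarrow> complex) \<Rightarrow> bool" where
  "polyfun m d f \<longleftrightarrow> (\<exists>c. \<forall>z. f z = (\<Sum>\<alpha>\<in>exps m d. c \<alpha> * (\<Prod>i<m. z i ^ \<alpha> i)))"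

definition Pgen :: "nat \<Rightarrow> nat \<Rightarrow> nat \<Rightarrow> ((nat \<Rightarrow> complex) \<Rightarrow> (nat \<Rightarrow> complex)) set" where
  "Pgen m k d = {F. (\<forall>j<k. polyfun m d (\<lambda>z. F z j)) \<and> (\<forall>z j. k \<le> j \<longrightarrow> F z j = 0)}"

definition Pgen_all :: "nat \<Rightarrow> nat \<Rightarrow> ((nat \<Rightarrow> complex) \<Rightarrow> (nat \<Rightarrow> complex)) set" where
  "Pgen_all m k = {F. \<exists>d. F \<in> Pgen m k d}"

definition Pnd :: "nat \<Rightarrow> nat \<Rightarrow> ((nat \<Rightarrow> complex) \<Rightarrow> (nat \<Rightarrow> complex)) set" where
  "Pnd n d = Pgen n n d"

definition Pn :: "nat \<Rightarrow> ((nat \<Rightarrow> complex) \<Rightarrow> (nat \<Rightarrow> complex)) set" where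
  "Pn n = Pgen_all n n"

definition pderiv_at :: "((nat \<Rightarrow> complex) \<Rightarrow> (nat \<Rightarrow> complex)) \<Rightarrow> nat \<Rightarrow> nat \<Rightarrow> (nat \<Rightarrow> complex) \<Rightarrow> complex" where
  "pderiv_at F j i z = deriv (\<lambda>t. F (z(i := t)) j) (z i)"

definition jac :: "nat \<Rightarrow> ((nat \<Rightarrow> complex) \<Rightarrow> (nat \<Rightarrow> complex)) \<Rightarrow> (nat \<Rightarrow> complex) \<Rightarrow> complex mat" where
  "jac n F z = mat n n (\<lambda>(i, j). pderiv_at F j i z)"

definition Jn :: "nat \<Rightarrow> ((nat \<Rightarrow> complex) \<Rightarrow> (nat \<Rightarrow> complex)) set" where
  "Jn n = {F \<in> Pn n. bij_betw F (Cn n) (Cn n) \<and>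
            (\<exists>G \<in> Pn n. \<forall>z \<in> Cn n. G (F z) = z \<and> F (G z) = z)}"

definition Jnd :: "nat \<Rightarrow> nat \<Rightarrow> ((nat \<Rightarrow> complex) \<Rightarrow> (nat \<Rightarrow> complex)) set" where
  "Jnd n d = Jn n \<inter> Pnd n d"

definition Jlin_nd :: "nat \<Rightarrow> nat \<Rightarrow> ((nat \<Rightarrow> complex) \<Rightarrow> (nat \<Rightarrow> complex)) set" where
  "Jlin_nd n d = {F \<in> Pnd n d. \<exists>c. c \<noteq> 0 \<and> (\<forall>z \<in> Cn n. det (jac n F z) = c)}"

definition join :: "nat \<Rightarrow> (nat \<Rightarrow> complex) \<Rightarrow> (nat \<Rightarrow> complex) \<Rightarrow> (nat \<Rightarrow> complex)" where
  "join n' z1 z2 = (\<lambda>i. if i < n' then z1 i else z2 (i - n'))"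

definition Rmap :: "nat \<Rightarrow> ((nat \<Rightarrow> complex) \<Rightarrow> (nat \<Rightarrow> complex)) \<Rightarrow> (nat \<Rightarrow> complex) \<Rightarrow> (nat \<Rightarrow> complex) \<Rightarrow> (nat \<Rightarrow> complex)" where
  "Rmap n' F z1 z2 = (\<lambda>k. F (join n' z1 z2) (n' + k))"

definition Jpart :: "nat \<Rightarrow> nat \<Rightarrow> nat \<Rightarrow> ((nat \<Rightarrow> complex) \<Rightarrow> (nat \<Rightarrow> complex)) set" where
  "Jpart n d n' = {F \<in> Pnd n d.
      (\<forall>z1 \<in> Cn n'. Rmap n' F z1 \<in> Jn (n - n')) \<and>
      bij_betw F (Cn n \<inter> F -` Cn n') (Cn n') \<and>
      (\<exists>H \<in> Pgen_all n' n. \<forall>y \<in> Cn n'. H y = inv_into (Cn n \<inter> F -` Cn n') F y)}"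

definition Jlin_part :: "nat \<Rightarrow> nat \<Rightarrow> nat \<Rightarrow> ((nat \<Rightarrow> complex) \<Rightarrow> (nat \<Rightarrow> complex)) set" where
  "Jlin_part n d n' = {F \<in> Pnd n d.
      (\<forall>z1 \<in> Cn n'. Rmap n' F z1 \<in> Jn (n - n')) \<and>
      (\<exists>c. c \<noteq> 0 \<and> (\<forall>z1 \<in> Cn n'.
          det (jac n F (join n' z1 (inv_into (Cn (n - n')) (Rmap n' F z1) (\<lambda>_. 0)))) = c))}"

end

theory Submission
  imports Defs
begin



definition monom :: "nat \<Rightarrow> (nat \<Rightarrow> nat) \<Rightarrow> (nat \<Rightarrow> complex) \<Rightarrow> complex" where
  "monom m \<alpha> z = (\<Prod>i<m. z i ^ \<alpha> i)"

lemma finite_exps: "finite (exps m d)"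
proof -
  have "exps m d \<subseteq> (\<lambda>g i. if i < m then g i else 0) ` ({..<m} \<rightarrow>\<^sub>E {..d})"
  proof
    fix \<alpha> assume a: "\<alpha> \<in> exps m d"
    have le: "\<alpha> i \<le> d" if "i < m" for i
    proof -
      have "\<alpha> i \<le> (\<Sum>k<m. \<alpha> k)" using that by (intro member_le_sum) auto
      thus ?thesis using a by (auto simp: exps_def)
    qed
    have "\<alpha> = (\<lambda>i. if i < m then restrict \<alpha> {..<m} i else 0)"
      using a by (auto simp: exps_def fun_eq_iff)
    moreover have "restrict \<alpha> {..<m} \<in> {..<m} \<rightarrow>\<^sub>E {..d}" using le by auto
    ultimately show "\<alpha> \<in> (\<lambda>g i. if i < m then g i else 0) ` ({..<m} \<rightarrow>\<^sub>E {..d})" by blast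
  qed
  thus ?thesis by (rule finite_subset) (intro finite_imageI finite_PiE, auto)
qed

lemma polyfun_mono_def: "polyfun m d f \<longleftrightarrow> (\<exists>c. \<forall>z. f z = (\<Sum>\<alpha>\<in>exps m d. c \<alpha> * monom m \<alpha> z))"
  by (simp add: polyfun_def monom_def)

lemma polyfun_rep:
  assumes "finite S" "\<And>x. x \<in> S \<Longrightarrow> e x \<in> exps m d"
    "\<And>z. f z = (\<Sum>x\<in>S. a x * monom m (e x) z)"
  shows "polyfun m d f"
  unfolding polyfun_mono_def
proof (intro exI allI)
  fix z
  have "(\<Sum>\<gamma>\<in>exps m d. (\<Sum>x\<in>{x\<in>S. e x = \<gamma>}. a x) * monom m \<gamma> z)
      = (\<Sum>\<gamma>\<in>exps m d. (\<Sum>x\<in>{x\<in>S. e x = \<gamma>}. a x * monom m (e x) z))"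
    by (auto simp: sum_distrib_right intro!: sum.cong)
  also have "\<dots> = (\<Sum>x\<in>S. a x * monom m (e x) z)"
    by (rule sum.group) (use assms finite_exps in auto)
  finally show "f z = (\<Sum>\<gamma>\<in>exps m d. (\<Sum>x\<in>{x\<in>S. e x = \<gamma>}. a x) * monom m \<gamma> z)"
    using assms(3) by simp
qed

lemma zero_exps: "(\<lambda>_. 0) \<in> exps m d" by (simp add: exps_def)

lemma mono_zero[simp]: "monom m (\<lambda>_. 0) z = 1" by (simp add: monom_def)

lemma pf_const: "polyfun m d (\<lambda>z. c)"
  by (rule polyfun_rep[of "{()}" "\<lambda>_. \<lambda>_. 0" _ _ _ "\<lambda>_. c"]) (auto simp: zero_exps)

lemma pf_var: assumes "i < m" "1 \<le> d" shows "polyfun m d (\<lambda>z. z i)"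
proof (rule polyfun_rep[of "{()}" "\<lambda>_. \<lambda>k. if k = i then 1 else 0" _ _ _ "\<lambda>_. 1"])
  show "(\<lambda>k. if k = i then 1 else 0) \<in> exps m d" using assms by (auto simp: exps_def)
  fix z
  have "monom m (\<lambda>k. if k = i then 1 else 0) z = (\<Prod>k<m. if k = i then z k else 1)"
    unfolding monom_def by (intro prod.cong) auto
  also have "\<dots> = z i" using assms by (simp add: prod.delta)
  finally show "z i = (\<Sum>x\<in>{()}. 1 * monom m (\<lambda>k. if k = i then 1 else 0) z)" by simp
qed auto

lemma pf_add: assumes "polyfun m d f" "polyfun m d g" shows "polyfun m d (\<lambda>z. f z + g z)"
proof -
  obtain c c' where "\<forall>z. f z = (\<Sum>\<alpha>\<in>exps m d. c \<alpha> * monom m \<alpha> z)" "\<forall>z. g z = (\<Sum>\<alpha>\<in>exps m d. c' \<alpha> * monom m \<alpha> z)"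
    using assms unfolding polyfun_mono_def by blast
  thus ?thesis unfolding polyfun_mono_def
    by (intro exI[of _ "\<lambda>\<alpha>. c \<alpha> + c' \<alpha>"]) (simp add: sum.distrib distrib_right)
qed

lemma mono_add: "monom m (\<lambda>i. \<alpha> i + \<beta> i) z = monom m \<alpha> z * monom m \<beta> z"
  by (simp add: monom_def power_add prod.distrib)

lemma pf_mult: assumes "polyfun m a f" "polyfun m b g" shows "polyfun m (a + b) (\<lambda>z. f z * g z)"
proof -
  obtain c c' where c: "\<forall>z. f z = (\<Sum>\<alpha>\<in>exps m a. c \<alpha> * monom m \<alpha> z)" and c': "\<forall>z. g z = (\<Sum>\<alpha>\<in>exps m b. c' \<alpha> * monom m \<alpha> z)"
    using assms unfolding polyfun_mono_def by blast
  show ?thesis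
  proof (rule polyfun_rep[of "exps m a \<times> exps m b" "\<lambda>(\<alpha>,\<beta>) i. \<alpha> i + \<beta> i" _ _ _ "\<lambda>(\<alpha>,\<beta>). c \<alpha> * c' \<beta>"])
    show "finite (exps m a \<times> exps m b)" using finite_exps by auto
    show "(case x of (\<alpha>, \<beta>) \<Rightarrow> \<lambda>i. \<alpha> i + \<beta> i) \<in> exps m (a + b)" if "x \<in> exps m a \<times> exps m b" for x
      using that by (auto simp: exps_def sum.distrib)
    fix z
    have "f z * g z = (\<Sum>\<alpha>\<in>exps m a. \<Sum>\<beta>\<in>exps m b. (c \<alpha> * monom m \<alpha> z) * (c' \<beta> * monom m \<beta> z))"
      using c c' by (simp add: sum_product)
    also have "\<dots> = (\<Sum>x\<in>exps m a \<times> exps m b. (case x of (\<alpha>, \<beta>) \<Rightarrow> c \<alpha> * c' \<beta>) * monom m (case x of (\<alpha>, \<beta>) \<Rightarrow> \<lambda>i. \<alpha> i + \<beta> i) z)"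
      by (subst sum.cartesian_product) (auto simp: mono_add intro!: sum.cong)
    finally show "f z * g z = \<dots>" .
  qed
qed

lemma pf_mono_deg: assumes "polyfun m d f" "d \<le> d'" shows "polyfun m d' f"
proof -
  obtain c where c: "\<forall>z. f z = (\<Sum>\<alpha>\<in>exps m d. c \<alpha> * monom m \<alpha> z)"
    using assms unfolding polyfun_mono_def by blast
  show ?thesis by (rule polyfun_rep[of "exps m d" id]) (use c assms finite_exps in \<open>auto simp: exps_def\<close>)
qed

lemma pf_mono_var: assumes "polyfun m d f" "m \<le> m'" shows "polyfun m' d f"
proof -
  obtain c where c: "\<forall>z. f z = (\<Sum>\<alpha>\<in>exps m d. c \<alpha> * monom m \<alpha> z)"
    using assms unfolding polyfun_mono_def by blast
  have "monom m \<alpha> z = monom m' \<alpha> z" if "\<alpha> \<in> exps m d" for \<alpha> z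
    unfolding monom_def
    by (rule prod.mono_neutral_left) (use that assms in \<open>auto simp: exps_def\<close>)
  moreover have "exps m d \<subseteq> exps m' d"
  proof
    fix \<alpha> assume a: "\<alpha> \<in> exps m d"
    have "(\<Sum>i<m'. \<alpha> i) = (\<Sum>i<m. \<alpha> i)"
      by (rule sum.mono_neutral_right) (use a assms in \<open>auto simp: exps_def\<close>)
    thus "\<alpha> \<in> exps m' d" using a assms by (auto simp: exps_def)
  qed
  ultimately show ?thesis
    by (intro polyfun_rep[of "exps m d" id _ _ _ c]) (use c finite_exps in auto)
qed

lemma pf_sum: assumes "finite I" "\<And>i. i \<in> I \<Longrightarrow> polyfun m d (f i)"
  shows "polyfun m d (\<lambda>z. \<Sum>i\<in>I. f i z)"
  using assms by (induction I rule: finite_induct) (auto intro: pf_add pf_const)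

lemma pf_cmult: assumes "polyfun m d f" shows "polyfun m d (\<lambda>z. c * f z)"
  using pf_mult[OF pf_const[of m 0 c] assms] by simp

lemma pf_neg: assumes "polyfun m d f" shows "polyfun m d (\<lambda>z. - f z)"
  using pf_cmult[OF assms, of "-1"] by simp

lemma pf_diff: assumes "polyfun m d f" "polyfun m d g" shows "polyfun m d (\<lambda>z. f z - g z)"
  using pf_add[OF assms(1) pf_neg[OF assms(2)]] by simp

lemma pf_dep: assumes "polyfun m d f" "\<And>i. i < m \<Longrightarrow> x i = y i" shows "f x = f y"
  using assms unfolding polyfun_def by auto

definition ispoly :: "nat \<Rightarrow> ((nat \<Rightarrow> complex) \<Rightarrow> complex) \<Rightarrow> bool" where
  "ispoly m f \<longleftrightarrow> (\<exists>d. polyfun m d f)"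

lemma ip_mult: "ispoly m f \<Longrightarrow> ispoly m g \<Longrightarrow> ispoly m (\<lambda>z. f z * g z)"
  unfolding ispoly_def using pf_mult by blast

lemma ip_const: "ispoly m (\<lambda>z. c)" unfolding ispoly_def using pf_const by blast

lemma ip_sum: assumes "finite I" "\<And>i. i \<in> I \<Longrightarrow> ispoly m (f i)"
  shows "ispoly m (\<lambda>z. \<Sum>i\<in>I. f i z)"
  using assms
proof (induction I rule: finite_induct)
  case empty then show ?case using ip_const[of m 0] by simp
next
  case (insert x F)
  have "ispoly m (f x)" using insert by auto
  then obtain a where "polyfun m a (f x)" unfolding ispoly_def by auto
  moreover obtain b where "polyfun m b (\<lambda>z. \<Sum>i\<in>F. f i z)" using insert unfolding ispoly_def by auto
  ultimately
  have "polyfun m (max a b) (f x)" "polyfun m (max a b) (\<lambda>z. \<Sum>i\<in>F. f i z)" by (auto intro: pf_mono_deg)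
  from pf_add[OF this] insert show ?case unfolding ispoly_def by auto
qed

lemma ip_prod: assumes "finite I" "\<And>i. i \<in> I \<Longrightarrow> ispoly m (f i)"
  shows "ispoly m (\<lambda>z. \<Prod>i\<in>I. f i z)"
  using assms
proof (induction I rule: finite_induct)
  case empty then show ?case using ip_const[of m 1] by simp
next
  case (insert x F)
  then show ?case using ip_mult[of m "f x" "\<lambda>z. \<Prod>i\<in>F. f i z"] by auto
qed

lemma ip_power: "ispoly m f \<Longrightarrow> ispoly m (\<lambda>z. f z ^ k)"
  using ip_prod[of "{..<k}" m "\<lambda>_. f"] by simp

lemma ip_comp: assumes "ispoly m' f" "\<And>i. i < m' \<Longrightarrow> ispoly m (h i)"
  shows "ispoly m (\<lambda>y. f (\<lambda>i. h i y))"
proof -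
  obtain d c where c: "\<forall>z. f z = (\<Sum>\<alpha>\<in>exps m' d. c \<alpha> * (\<Prod>i<m'. z i ^ \<alpha> i))"
    using assms unfolding ispoly_def polyfun_def by blast
  have "ispoly m (\<lambda>y. \<Sum>\<alpha>\<in>exps m' d. c \<alpha> * (\<Prod>i<m'. h i y ^ \<alpha> i))"
    by (intro ip_sum finite_exps ip_mult ip_const ip_prod ip_power assms) auto
  thus ?thesis using c by simp
qed

lemma fd_prod: assumes "finite I" "\<And>i. i \<in> I \<Longrightarrow> f i field_differentiable (at t0)"
  shows "(\<lambda>t. \<Prod>i\<in>I. f i t) field_differentiable (at t0)"
  using assms by (induction I rule: finite_induct) (auto intro!: field_differentiable_mult)

lemma pf_fd: assumes "polyfun m d f"
  shows "(\<lambda>t. f (z(i:=t))) field_differentiable (at t0)"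
proof -
  obtain c where c: "\<forall>z. f z = (\<Sum>\<alpha>\<in>exps m d. c \<alpha> * (\<Prod>k<m. z k ^ \<alpha> k))"
    using assms unfolding polyfun_def by blast
  have fd: "(\<lambda>t. (z(i:=t)) k) field_differentiable (at t0)" for k
    by (cases "k = i") auto
  have "(\<lambda>t. \<Sum>\<alpha>\<in>exps m d. c \<alpha> * (\<Prod>k<m. (z(i:=t)) k ^ \<alpha> k)) field_differentiable (at t0)"
    by (intro field_differentiable_sum field_differentiable_mult field_differentiable_const fd_prod
        field_differentiable_power fd) auto
  thus ?thesis using c by simp
qed

definition pd :: "((nat \<Rightarrow> complex) \<Rightarrow> complex) \<Rightarrow> nat \<Rightarrow> (nat \<Rightarrow> complex) \<Rightarrow> complex" where
  "pd f i z = deriv (\<lambda>t. f (z(i:=t))) (z i)"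

lemma pf_pd: assumes "polyfun m d f"
  shows "((\<lambda>t. f (z(i:=t))) has_field_derivative pd f i z) (at (z i))"
  unfolding pd_def using pf_fd[OF assms] DERIV_deriv_iff_field_differentiable by blast

lemma upd_has: "((\<lambda>t. (z(i:=t)) k) has_field_derivative (if k = i then 1 else 0)) (at t0)"
  by (cases "k = i") (auto intro!: derivative_eq_intros)




definition coefF :: "nat \<Rightarrow> nat \<Rightarrow> ((nat \<Rightarrow> complex) \<Rightarrow> (nat \<Rightarrow> complex)) \<Rightarrow> nat \<Rightarrow> (nat \<Rightarrow> nat) \<Rightarrow> complex" where
  "coefF n d F j = (SOME c. \<forall>z. F z j = (\<Sum>\<alpha>\<in>exps n d. c \<alpha> * monom n \<alpha> z))"

definition Gf :: "nat \<Rightarrow> nat \<Rightarrow> ((nat \<Rightarrow> complex) \<Rightarrow> (nat \<Rightarrow> complex)) \<Rightarrow> nat \<Rightarrow> nat \<Rightarrow> (nat \<Rightarrow> complex) \<Rightarrow> complex" where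
  "Gf n d F i j z = (\<Sum>\<alpha>\<in>exps n d. (if 0 < \<alpha> i then coefF n d F j \<alpha> * (of_nat (\<alpha> i) / of_nat (\<Sum>k<n. \<alpha> k)) * monom n (\<alpha>(i := \<alpha> i - 1)) z else 0))"

lemma coefF: assumes "F \<in> Pnd n d" "j < n"
  shows "F z j = (\<Sum>\<alpha>\<in>exps n d. coefF n d F j \<alpha> * monom n \<alpha> z)"
proof -
  have "\<exists>c. \<forall>z. F z j = (\<Sum>\<alpha>\<in>exps n d. c \<alpha> * monom n \<alpha> z)"
    using assms unfolding Pnd_def Pgen_def polyfun_mono_def by auto
  from someI_ex[OF this] show ?thesis unfolding coefF_def by blast
qed

lemma exps_dec: assumes "\<alpha> \<in> exps n d" "i < n" "0 < \<alpha> i"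
  shows "\<alpha>(i := \<alpha> i - 1) \<in> exps n (d - 1)"
proof -
  have s: "(\<Sum>k<n. \<alpha> k) = \<alpha> i + (\<Sum>k\<in>{..<n}-{i}. \<alpha> k)"
    using assms by (subst sum.remove[of _ i]) auto
  have s2: "(\<Sum>k<n. (\<alpha>(i := \<alpha> i - 1)) k) = (\<alpha> i - 1) + (\<Sum>k\<in>{..<n}-{i}. \<alpha> k)"
    using assms by (subst sum.remove[of _ i]) (auto intro!: sum.cong)
  show ?thesis using assms s s2 by (auto simp: exps_def)
qed

lemma Gf_poly: assumes "i < n" shows "polyfun n (d - 1) (Gf n d F i j)"
proof (rule polyfun_rep[of "exps n d" "\<lambda>\<alpha>. if 0 < \<alpha> i then \<alpha>(i := \<alpha> i - 1) else (\<lambda>_. 0)" _ _ _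
      "\<lambda>\<alpha>. if 0 < \<alpha> i then coefF n d F j \<alpha> * (of_nat (\<alpha> i) / of_nat (\<Sum>k<n. \<alpha> k)) else 0"])
  show "finite (exps n d)" by (rule finite_exps)
  show "(if 0 < \<alpha> i then \<alpha>(i := \<alpha> i - 1) else (\<lambda>_. 0)) \<in> exps n (d - 1)" if "\<alpha> \<in> exps n d" for \<alpha>
    using exps_dec[OF that assms] zero_exps by auto
  fix z show "Gf n d F i j z = (\<Sum>\<alpha>\<in>exps n d. (if 0 < \<alpha> i then coefF n d F j \<alpha> * (of_nat (\<alpha> i) / of_nat (\<Sum>k<n. \<alpha> k)) else 0) *
          monom n (if 0 < \<alpha> i then \<alpha>(i := \<alpha> i - 1) else (\<lambda>_. 0)) z)"
    unfolding Gf_def by (intro sum.cong) auto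
qed

lemma mono_dec: assumes "i < n" "0 < \<alpha> i"
  shows "z i * monom n (\<alpha>(i := \<alpha> i - 1)) z = monom n \<alpha> z"
proof -
  have "monom n (\<alpha>(i := \<alpha> i - 1)) z = z i ^ (\<alpha> i - 1) * (\<Prod>k\<in>{..<n}-{i}. z k ^ \<alpha> k)"
    unfolding monom_def using assms by (subst prod.remove[of _ i]) (auto intro!: prod.cong)
  moreover have "monom n \<alpha> z = z i ^ \<alpha> i * (\<Prod>k\<in>{..<n}-{i}. z k ^ \<alpha> k)"
    unfolding monom_def using assms by (subst prod.remove[of _ i]) auto
  moreover have "z i * z i ^ (\<alpha> i - 1) = z i ^ \<alpha> i"
    using assms by (cases "\<alpha> i") auto
  ultimately show ?thesis by (simp add: mult.assoc[symmetric])
qed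

lemma mono_const: assumes "\<alpha> \<in> exps n d" "(\<Sum>k<n. \<alpha> k) = 0" shows "monom n \<alpha> z = 1"
  using assms unfolding monom_def by (auto intro!: prod.neutral)

lemma decomp: assumes "F \<in> Pnd n d" "j < n"
  shows "F z j = F (\<lambda>_. 0) j + (\<Sum>i<n. z i * Gf n d F i j z)"
proof -
  define c where "c = coefF n d F j"
  define K where "K = (\<Sum>\<alpha>\<in>exps n d. if (\<Sum>k<n. \<alpha> k) = 0 then c \<alpha> else 0)"
  have key: "c \<alpha> * monom n \<alpha> z = (if (\<Sum>k<n. \<alpha> k) = 0 then c \<alpha> else 0) +
      (\<Sum>i<n. z i * (if 0 < \<alpha> i then c \<alpha> * (of_nat (\<alpha> i) / of_nat (\<Sum>k<n. \<alpha> k)) * monom n (\<alpha>(i := \<alpha> i - 1)) z else 0))"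
    if a: "\<alpha> \<in> exps n d" for \<alpha> z
  proof (cases "(\<Sum>k<n. \<alpha> k) = 0")
    case True
    hence "\<alpha> i = 0" if "i < n" for i using that by auto
    thus ?thesis using True mono_const[OF a True] by simp
  next
    case False
    have "(\<Sum>i<n. z i * (if 0 < \<alpha> i then c \<alpha> * (of_nat (\<alpha> i) / of_nat (\<Sum>k<n. \<alpha> k)) * monom n (\<alpha>(i := \<alpha> i - 1)) z else 0))
        = (\<Sum>i<n. c \<alpha> * monom n \<alpha> z * (of_nat (\<alpha> i) / of_nat (\<Sum>k<n. \<alpha> k)))"
    proof (intro sum.cong refl)
      fix i assume "i \<in> {..<n}"
      thus "z i * (if 0 < \<alpha> i then c \<alpha> * (of_nat (\<alpha> i) / of_nat (\<Sum>k<n. \<alpha> k)) * monom n (\<alpha>(i := \<alpha> i - 1)) z else 0)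
          = c \<alpha> * monom n \<alpha> z * (of_nat (\<alpha> i) / of_nat (\<Sum>k<n. \<alpha> k))"
        using mono_dec[of i n \<alpha> z] by (auto simp: algebra_simps)
    qed
    also have "\<dots> = c \<alpha> * monom n \<alpha> z * (of_nat (\<Sum>i<n. \<alpha> i) / of_nat (\<Sum>k<n. \<alpha> k))"
      by (simp add: sum_distrib_left[symmetric] sum_divide_distrib[symmetric])
    also have "\<dots> = c \<alpha> * monom n \<alpha> z" proof - have "complex_of_nat (\<Sum>k<n. \<alpha> k) \<noteq> 0" using False by (metis of_nat_eq_0_iff) thus ?thesis by (metis divide_self mult_1_right) qed
    finally show ?thesis using False by (simp del: sum_eq_0_iff)
  qed
  have gen: "F z j = K + (\<Sum>i<n. z i * Gf n d F i j z)" for z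
  proof -
    have "F z j = (\<Sum>\<alpha>\<in>exps n d. c \<alpha> * monom n \<alpha> z)" using coefF[OF assms] c_def by simp
    also have "\<dots> = K + (\<Sum>\<alpha>\<in>exps n d. \<Sum>i<n. z i * (if 0 < \<alpha> i then c \<alpha> * (of_nat (\<alpha> i) / of_nat (\<Sum>k<n. \<alpha> k)) * monom n (\<alpha>(i := \<alpha> i - 1)) z else 0))"
      unfolding K_def by (simp add: key sum.distrib cong: sum.cong)
    also have "(\<Sum>\<alpha>\<in>exps n d. \<Sum>i<n. z i * (if 0 < \<alpha> i then c \<alpha> * (of_nat (\<alpha> i) / of_nat (\<Sum>k<n. \<alpha> k)) * monom n (\<alpha>(i := \<alpha> i - 1)) z else 0))
       = (\<Sum>i<n. z i * Gf n d F i j z)"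
      unfolding c_def Gf_def by (subst sum.swap) (simp add: sum_distrib_left)
    finally show ?thesis .
  qed
  from gen[of "\<lambda>_. 0"] gen[of z] show ?thesis by simp
qed




definition gvec :: "nat \<Rightarrow> nat \<Rightarrow> ((nat \<Rightarrow> complex) \<Rightarrow> (nat \<Rightarrow> complex)) \<Rightarrow> (nat \<Rightarrow> complex) \<Rightarrow> (nat \<Rightarrow> complex)" where
  "gvec n d F z = (\<lambda>k. if k < n*n then Gf n d F (k div n) (k mod n) z else 0)"

definition emb :: "nat \<Rightarrow> nat \<Rightarrow> ((nat \<Rightarrow> complex) \<Rightarrow> (nat \<Rightarrow> complex)) \<Rightarrow> (nat \<Rightarrow> complex) \<Rightarrow> (nat \<Rightarrow> complex)" where
  "emb n d F z = join n z (gvec n d F z)"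

definition Phi :: "nat \<Rightarrow> nat \<Rightarrow> ((nat \<Rightarrow> complex) \<Rightarrow> (nat \<Rightarrow> complex)) \<Rightarrow> ((nat \<Rightarrow> complex) \<Rightarrow> (nat \<Rightarrow> complex))" where
  "Phi n d F = (\<lambda>x m. if m < n then (\<Sum>k<n. x k * x (n + k*n + m)) + F (\<lambda>_. 0) m
      else if m < n + n*n then x m - Gf n d F ((m - n) div n) ((m - n) mod n) x else 0)"

lemma idx: fixes j n k :: nat assumes "j < n" "k < n" shows "k*n+j < n*n" "(k*n+j) div n = k" "(k*n+j) mod n = j"
proof -
  have "k*n + j < k*n + n" using assms by simp
  also have "\<dots> = (k+1)*n" by simp
  also have "\<dots> \<le> n*n" using assms by (intro mult_right_mono) auto
  finally show "k*n+j < n*n" .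
  show "(k*n+j) div n = k" "(k*n+j) mod n = j" using assms by auto
qed

lemma idx2: fixes m n :: nat assumes "m < n*n" shows "m div n < n" "m mod n < n" "m = (m div n)*n + m mod n"
proof -
  have "0 < n" using assms by (cases n) auto
  thus "m div n < n" "m mod n < n" using assms by (auto simp: div_less_iff_less_mult)
  show "m = (m div n)*n + m mod n" by simp
qed

lemma Nsimp: "n*(n+1) = n + n*(n::nat)" "n*(n+1) - n = n*(n::nat)" by (simp_all add: algebra_simps)

lemma Gf_dep: assumes "\<And>k. k < n \<Longrightarrow> x k = y k" shows "Gf n d F i j x = Gf n d F i j y"
  unfolding Gf_def monom_def using assms by (intro sum.cong refl) auto

lemma gvec_dep: assumes "\<And>k. k < n \<Longrightarrow> x k = y k" shows "gvec n d F x = gvec n d F y"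
  unfolding gvec_def using Gf_dep[OF assms] by auto

lemma Pnd_zero: "F \<in> Pnd n d \<Longrightarrow> n \<le> j \<Longrightarrow> F z j = 0"
  by (auto simp: Pnd_def Pgen_def)

lemma Pnd_Cn: "F \<in> Pnd n d \<Longrightarrow> F z \<in> Cn n"
  by (auto simp: Pnd_def Pgen_def Cn_def)

lemma Phi_Pnd: assumes "F \<in> Pnd n d" "3 \<le> d" shows "Phi n d F \<in> Pnd (n*(n+1)) (d-1)"
  unfolding Pnd_def Pgen_def
proof (intro CollectI conjI allI impI)
  fix z j assume "n*(n+1) \<le> j"
  hence "n + n*n \<le> j" by (simp only: Nsimp)
  thus "Phi n d F z j = 0" by (simp add: Phi_def)
next
  fix j assume j0: "j < n*(n+1)"
  hence j: "j < n + n*n" by (simp only: Nsimp)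
  show "polyfun (n*(n+1)) (d-1) (\<lambda>z. Phi n d F z j)"
  proof (cases "j < n")
    case True
    have "polyfun (n*(n+1)) 2 (\<lambda>z. z k * z (n + k*n + j))" if "k < n" for k
    proof -
      have "k < n*(n+1)" "n + k*n + j < n*(n+1)" using idx[OF True that] that unfolding Nsimp by auto
      from pf_mult[OF pf_var[OF this(1), of 1] pf_var[OF this(2), of 1]] show ?thesis by (simp add: numeral_2_eq_2)
    qed
    hence "polyfun (n*(n+1)) 2 (\<lambda>z. (\<Sum>k<n. z k * z (n + k*n + j)))"
      by (intro pf_sum) auto
    hence "polyfun (n*(n+1)) (d-1) (\<lambda>z. (\<Sum>k<n. z k * z (n + k*n + j)))"
      by (rule pf_mono_deg) (use assms in auto)
    hence "polyfun (n*(n+1)) (d-1) (\<lambda>z. (\<Sum>k<n. z k * z (n + k*n + j)) + F (\<lambda>_. 0) j)"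
      by (intro pf_add pf_const)
    thus ?thesis using True by (simp add: Phi_def)
  next
    case False
    have "polyfun (n*(n+1)) (d-1) (\<lambda>z. z j - Gf n d F ((j - n) div n) ((j - n) mod n) z)"
    proof (intro pf_diff pf_var)
      have "j - n < n*n" using j False by simp
      hence "(j - n) div n < n" using idx2[of "j-n" n] by simp
      thus "polyfun (n*(n+1)) (d-1) (Gf n d F ((j - n) div n) ((j - n) mod n))"
        by (intro pf_mono_var[OF Gf_poly]) auto
    qed (use j0 assms in auto)
    thus ?thesis using False j by (simp add: Phi_def)
  qed
qed

lemma emb_low: "k < n \<Longrightarrow> emb n d F z k = z k"
  by (simp add: emb_def join_def)

lemma emb_high: "emb n d F z (n + m) = gvec n d F z m"
  by (simp add: emb_def join_def)

lemma Phi_emb: assumes "F \<in> Pnd n d" shows "Phi n d F (emb n d F z) = F z"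
proof
  fix m
  let ?x = "emb n d F z"
  have Gx: "Gf n d F a b ?x = Gf n d F a b z" for a b by (rule Gf_dep) (simp add: emb_low)
  show "Phi n d F ?x m = F z m"
  proof (cases "m < n")
    case True
    have "?x (n + k*n + m) = Gf n d F k m z" if "k < n" for k
      using emb_high[of n d F z "k*n+m"] idx[OF True that] by (simp add: add.assoc gvec_def)
    hence "(\<Sum>k<n. ?x k * ?x (n + k*n + m)) = (\<Sum>k<n. z k * Gf n d F k m z)"
      by (intro sum.cong) (auto simp: emb_low)
    thus ?thesis using True decomp[OF assms True, of z] by (simp add: Phi_def)
  next
    case False
    show ?thesis
    proof (cases "m < n + n*n")
      case True
      have "?x m = gvec n d F z (m - n)" using emb_high[of n d F z "m-n"] False by simp
      thus ?thesis using True False Pnd_zero[OF assms, of m] Gx by (simp add: Phi_def gvec_def)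
    qed (use False Pnd_zero[OF assms, of m] in \<open>simp add: Phi_def\<close>)
  qed
qed

lemma emb_Cn: "emb n d F z \<in> Cn (n*(n+1))"
  unfolding Cn_def emb_def join_def gvec_def by (auto simp: Nsimp)

lemma emb_inj: assumes "z \<in> Cn n" "z' \<in> Cn n" "emb n d F z = emb n d F z'" shows "z = z'"
proof
  fix i show "z i = z' i"
  proof (cases "i < n")
    case True thus ?thesis using assms(3) emb_low[of i n d F] by metis
  qed (use assms in \<open>auto simp: Cn_def\<close>)
qed

lemma S_char: assumes "F \<in> Pnd n d"
  shows "Cn (n*(n+1)) \<inter> Phi n d F -` Cn n = emb n d F ` Cn n"
proof
  show "emb n d F ` Cn n \<subseteq> Cn (n*(n+1)) \<inter> Phi n d F -` Cn n"
    using emb_Cn Phi_emb[OF assms] Pnd_Cn[OF assms] by auto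
next
  show "Cn (n*(n+1)) \<inter> Phi n d F -` Cn n \<subseteq> emb n d F ` Cn n"
  proof
    fix x assume x: "x \<in> Cn (n*(n+1)) \<inter> Phi n d F -` Cn n"
    define z where "z = (\<lambda>i. if i < n then x i else 0)"
    have zC: "z \<in> Cn n" by (auto simp: z_def Cn_def)
    have "x = emb n d F z"
    proof
      fix i
      show "x i = emb n d F z i"
      proof (cases "i < n")
        case True thus ?thesis by (simp add: emb_low z_def)
      next
        case False
        show ?thesis
        proof (cases "i < n + n*n")
          case True
          have "Phi n d F x i = 0" using x False by (auto simp: Cn_def)
          hence "x i = Gf n d F ((i - n) div n) ((i - n) mod n) x"
            using True False by (simp add: Phi_def)
          also have "\<dots> = Gf n d F ((i - n) div n) ((i - n) mod n) z"
            by (rule Gf_dep) (simp add: z_def)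
          also have "\<dots> = emb n d F z i"
            using emb_high[of n d F z "i - n"] True False by (simp add: gvec_def)
          finally show ?thesis .
        next
          case False2: False
          have "x i = 0" using x False2 by (auto simp: Cn_def Nsimp)
          moreover have "emb n d F z i = 0" using emb_Cn[of n d F z] False2 by (auto simp: Cn_def Nsimp)
          ultimately show ?thesis by simp
        qed
      qed
    qed
    thus "x \<in> emb n d F ` Cn n" using zC by blast
  qed
qed

lemma Rmap_Phi: assumes "z1 \<in> Cn n"
  shows "Rmap n (Phi n d F) z1 = (\<lambda>z2 k. if k < n*n then z2 k - gvec n d F z1 k else 0)"
proof (intro ext)
  fix z2 k
  have G: "Gf n d F a b (join n z1 z2) = Gf n d F a b z1" for a b
    by (rule Gf_dep) (simp add: join_def)
  show "Rmap n (Phi n d F) z1 z2 k = (if k < n*n then z2 k - gvec n d F z1 k else 0)"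
    unfolding Rmap_def Phi_def using G by (auto simp: join_def gvec_def)
qed

lemma gvec_Cn: "gvec n d F z \<in> Cn (n*n)" by (auto simp: gvec_def Cn_def)

lemma Rmap_Jn: assumes "z1 \<in> Cn n"
  shows "Rmap n (Phi n d F) z1 \<in> Jn (n*(n+1) - n)"
proof -
  let ?g = "gvec n d F z1"
  let ?R = "\<lambda>z2 k. if k < n*n then z2 k - ?g k else 0"
  let ?S = "\<lambda>z2 k. if k < n*n then z2 k + ?g k else (0::complex)"
  have RP: "?R \<in> Pn (n*n)" unfolding Pn_def Pgen_all_def Pgen_def
    by (intro exI[of _ 1] CollectI conjI allI impI) (auto intro!: pf_diff pf_var pf_const)
  have SP: "?S \<in> Pn (n*n)" unfolding Pn_def Pgen_all_def Pgen_def
    by (intro exI[of _ 1] CollectI conjI allI impI) (auto intro!: pf_add pf_var pf_const)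
  have inv1: "?S (?R z) = z" "?R (?S z) = z" if "z \<in> Cn (n*n)" for z
    using that by (auto simp: Cn_def fun_eq_iff)
  have bij: "bij_betw ?R (Cn (n*n)) (Cn (n*n))"
    by (rule bij_betw_byWitness[of _ ?S]) (use inv1 in \<open>auto simp: Cn_def\<close>)
  have "?R \<in> Jn (n*n)" unfolding Jn_def
  proof (intro CollectI conjI RP bij bexI[OF _ SP] ballI)
    fix z assume "z \<in> Cn (n*n)" thus "?S (?R z) = z" "?R (?S z) = z" using inv1 by auto
  qed
  thus ?thesis unfolding Rmap_Phi[OF assms] Nsimp(2) .
qed

lemma Rmap_inv: assumes "z1 \<in> Cn n"
  shows "inv_into (Cn (n*(n+1) - n)) (Rmap n (Phi n d F) z1) (\<lambda>_. 0) = gvec n d F z1"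
proof -
  have "Rmap n (Phi n d F) z1 \<in> Jn (n*(n+1) - n)" by (rule Rmap_Jn[OF assms])
  hence inj: "inj_on (Rmap n (Phi n d F) z1) (Cn (n*n))" unfolding Jn_def Nsimp(2) bij_betw_def by blast
  have e: "Rmap n (Phi n d F) z1 (gvec n d F z1) = (\<lambda>_. 0)"
    unfolding Rmap_Phi[OF assms] by auto
  show ?thesis unfolding Nsimp(2) using inv_into_f_eq inj gvec_Cn e by metis
qed




lemma det_block:
  fixes A :: "complex mat"
  assumes A: "A \<in> carrier_mat n n" and C: "C \<in> carrier_mat n m" and B: "B \<in> carrier_mat m n"
  shows "det (four_block_mat A C B (1\<^sub>m m)) = det (A - C * B)"
proof -
  let ?P = "four_block_mat (A - C * B) C (0\<^sub>m m n) (1\<^sub>m m)"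
  let ?Q = "four_block_mat (1\<^sub>m n) (0\<^sub>m n m) B (1\<^sub>m m)"
  have ACB: "A - C * B \<in> carrier_mat n n" using A B C by auto
  have "?P * ?Q = four_block_mat ((A - C * B) * 1\<^sub>m n + C * B) ((A - C * B) * 0\<^sub>m n m + C * 1\<^sub>m m)
      (0\<^sub>m m n * 1\<^sub>m n + 1\<^sub>m m * B) (0\<^sub>m m n * 0\<^sub>m n m + 1\<^sub>m m * 1\<^sub>m m)"
    by (rule mult_four_block_mat[OF ACB C _ one_carrier_mat one_carrier_mat _ B one_carrier_mat]) auto
  also have "\<dots> = four_block_mat A C B (1\<^sub>m m)"
  proof (rule cong_four_block_mat)
    show "(A - C * B) * 1\<^sub>m n + C * B = A" using A B C by (intro eq_matI) auto
    show "(A - C * B) * 0\<^sub>m n m + C * 1\<^sub>m m = C" using A B C by (intro eq_matI) auto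
    show "0\<^sub>m m n * 1\<^sub>m n + 1\<^sub>m m * B = B" using A B C by (intro eq_matI) auto
    show "0\<^sub>m m n * 0\<^sub>m n m + 1\<^sub>m m * 1\<^sub>m m = (1\<^sub>m m :: complex mat)"
      by simp
  qed
  finally have eq: "four_block_mat A C B (1\<^sub>m m) = ?P * ?Q" ..
  have P: "?P \<in> carrier_mat (n + m) (n + m)" using ACB by auto
  have Q: "?Q \<in> carrier_mat (n + m) (n + m)" by auto
  have dP: "det ?P = det (A - C * B)"
    using det_four_block_mat_lower_left_zero[OF ACB C refl one_carrier_mat] by simp
  have dQ: "det ?Q = 1"
    using det_four_block_mat_upper_right_zero[OF one_carrier_mat refl B one_carrier_mat] by simp
  show ?thesis unfolding eq det_mult[OF P Q] dP dQ by simp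
qed

lemma sum_reidx: fixes n j :: nat assumes "j < n"
  shows "(\<Sum>m<n*n. if m mod n = j then f (m div n) else 0) = (\<Sum>k<n. f k)"
proof -
  have set: "{m \<in> {..<n*n}. m mod n = j} = (\<lambda>k. k*n + j) ` {..<n}"
  proof
    show "{m \<in> {..<n*n}. m mod n = j} \<subseteq> (\<lambda>k. k*n + j) ` {..<n}"
    proof
      fix m assume m: "m \<in> {m \<in> {..<n*n}. m mod n = j}"
      hence "m = (m div n)*n + j" "m div n < n" using idx2[of m n] by auto
      thus "m \<in> (\<lambda>k. k*n + j) ` {..<n}" by blast
    qed
    show "(\<lambda>k. k*n + j) ` {..<n} \<subseteq> {m \<in> {..<n*n}. m mod n = j}"
      using idx[OF assms] by auto
  qed
  have inj: "inj_on (\<lambda>k. k*n + j) {..<n}" using assms by (auto simp: inj_on_def)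
  have "(\<Sum>m<n*n. if m mod n = j then f (m div n) else 0) = (\<Sum>m\<in>{m \<in> {..<n*n}. m mod n = j}. f (m div n))"
    by (rule sym, rule sum.inter_filter) simp
  also have "\<dots> = (\<Sum>k<n. f ((k*n+j) div n))" unfolding set by (subst sum.reindex[OF inj]) simp
  also have "\<dots> = (\<Sum>k<n. f k)" using idx[OF assms] by simp
  finally show ?thesis .
qed

lemma ifmult: "(if c then 1 else 0) * (x::complex) = (if c then x else 0)" by simp

lemma jacF_entry: assumes F: "F \<in> Pnd n d" and i: "i < n" and j: "j < n"
  shows "pderiv_at F j i z = Gf n d F i j z + (\<Sum>k<n. z k * pd (Gf n d F k j) i z)"
proof -
  have fe: "(\<lambda>t. F (z(i:=t)) j) = (\<lambda>t. F (\<lambda>_. 0) j + (\<Sum>k<n. (z(i:=t)) k * Gf n d F k j (z(i:=t))))"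
    by (rule ext, rule decomp[OF F j])
  have "((\<lambda>t. F (\<lambda>_. 0) j + (\<Sum>k<n. (z(i:=t)) k * Gf n d F k j (z(i:=t)))) has_field_derivative
      (0 + (\<Sum>k<n. (if k = i then 1 else 0) * Gf n d F k j (z(i:=z i)) + pd (Gf n d F k j) i z * (z(i:=z i)) k))) (at (z i))"
    by (intro DERIV_add DERIV_const DERIV_sum DERIV_mult upd_has pf_pd[OF Gf_poly]) auto
  hence "pderiv_at F j i z = (\<Sum>k<n. (if k = i then 1 else 0) * Gf n d F k j z + pd (Gf n d F k j) i z * z k)"
    unfolding pderiv_at_def fe by (simp add: DERIV_imp_deriv)
  also have "\<dots> = Gf n d F i j z + (\<Sum>k<n. z k * pd (Gf n d F k j) i z)"
    using i by (simp add: sum.distrib sum.delta mult.commute ifmult)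
  finally show ?thesis .
qed

lemma dPhi_low: assumes F: "F \<in> Pnd n d" and z1: "z1 \<in> Cn n" and j: "j < n" and i: "i < n + n*n"
  shows "pderiv_at (Phi n d F) j i (emb n d F z1) =
    (if i < n then Gf n d F i j z1 else if (i - n) mod n = j then z1 ((i - n) div n) else 0)"
proof -
  define p where "p = emb n d F z1"
  have fe: "(\<lambda>t. Phi n d F (p(i:=t)) j) = (\<lambda>t. (\<Sum>k<n. (p(i:=t)) k * (p(i:=t)) (n + k*n + j)) + F (\<lambda>_. 0) j)"
    using j by (auto simp: Phi_def)
  have "((\<lambda>t. (\<Sum>k<n. (p(i:=t)) k * (p(i:=t)) (n + k*n + j)) + F (\<lambda>_. 0) j) has_field_derivative
      ((\<Sum>k<n. (if k = i then 1 else 0) * (p(i:=p i)) (n + k*n + j) + (if n + k*n + j = i then 1 else 0) * (p(i:=p i)) k) + 0)) (at (p i))"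
    by (intro DERIV_add DERIV_const DERIV_sum DERIV_mult upd_has)
  hence D: "pderiv_at (Phi n d F) j i p = (\<Sum>k<n. (if k = i then 1 else 0) * (p(i:=p i)) (n + k*n + j) + (if n + k*n + j = i then 1 else 0) * (p(i:=p i)) k) + 0"
    unfolding pderiv_at_def fe by (rule DERIV_imp_deriv)
  have "pderiv_at (Phi n d F) j i p = (\<Sum>k<n. (if k = i then p (n + k*n + j) else 0)) + (\<Sum>k<n. (if n + k*n + j = i then p k else 0))"
    unfolding D fun_upd_triv ifmult sum.distrib by simp
  also have "\<dots> = (if i < n then Gf n d F i j z1 else if (i - n) mod n = j then z1 ((i - n) div n) else 0)"
  proof (cases "i < n")
    case True
    have "p (n + i*n + j) = Gf n d F i j z1"
      using emb_high[of n d F z1 "i*n+j"] idx[OF j True] by (simp add: p_def add.assoc gvec_def)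
    thus ?thesis using True by (simp add: sum.delta)
  next
    case False
    have "i - n < n*n" using i False by simp
    hence dn: "(i - n) div n < n" using idx2 by simp
    have "n + k*n + j = i \<longleftrightarrow> (k = (i - n) div n \<and> (i - n) mod n = j)" if "k < n" for k
    proof
      assume "n + k*n + j = i"
      hence "i - n = k*n + j" by simp
      thus "k = (i - n) div n \<and> (i - n) mod n = j" using idx[OF j that] by simp
    next
      assume "k = (i - n) div n \<and> (i - n) mod n = j"
      hence "n + k*n + j = n + ((i - n) div n * n + (i - n) mod n)" by simp
      also have "\<dots> = i" using False by simp
      finally show "n + k*n + j = i" .
    qed
    hence "(\<Sum>k<n. (if n + k*n + j = i then p k else 0)) = (\<Sum>k<n. (if k = (i - n) div n then (if (i - n) mod n = j then p k else 0) else 0))"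
      by (intro sum.cong) auto
    also have "\<dots> = (if (i - n) mod n = j then p ((i - n) div n) else 0)"
      using dn by (simp add: sum.delta)
    finally show ?thesis using False dn
      by (simp add: sum.delta p_def emb_low)
  qed
  finally show ?thesis unfolding p_def .
qed




lemma dPhi_high: assumes F: "F \<in> Pnd n d" and z1: "z1 \<in> Cn n" and j1: "n \<le> j" and j2: "j < n + n*n"
  and i: "i < n + n*n"
  shows "pderiv_at (Phi n d F) j i (emb n d F z1) =
    (if j = i then 1 else 0) - (if i < n then pd (Gf n d F ((j - n) div n) ((j - n) mod n)) i z1 else 0)"
proof -
  define p where "p = emb n d F z1"
  define a where "a = (j - n) div n"
  define b where "b = (j - n) mod n"
  have "j - n < n*n" using j1 j2 by simp
  hence a: "a < n" using idx2 a_def by simp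
  have fe: "(\<lambda>t. Phi n d F (p(i:=t)) j) = (\<lambda>t. (p(i:=t)) j - Gf n d F a b (p(i:=t)))"
    using j1 j2 by (auto simp: Phi_def a_def b_def)
  show ?thesis
  proof (cases "i < n")
    case True
    have "Gf n d F a b (p(i:=t)) = Gf n d F a b (z1(i:=t))" for t
      by (rule Gf_dep) (simp add: p_def emb_low)
    hence fe2: "(\<lambda>t. Phi n d F (p(i:=t)) j) = (\<lambda>t. (p(i:=t)) j - Gf n d F a b (z1(i:=t)))"
      unfolding fe by simp
    have pi: "p i = z1 i" using True by (simp add: p_def emb_low)
    have "((\<lambda>t. (p(i:=t)) j - Gf n d F a b (z1(i:=t))) has_field_derivative
        ((if j = i then 1 else 0) - pd (Gf n d F a b) i z1)) (at (z1 i))"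
      by (intro DERIV_diff upd_has pf_pd[OF Gf_poly[OF a]])
    hence "pderiv_at (Phi n d F) j i p = (if j = i then 1 else 0) - pd (Gf n d F a b) i z1"
      unfolding pderiv_at_def fe2 pi by (rule DERIV_imp_deriv)
    thus ?thesis using True unfolding p_def a_def b_def by simp
  next
    case False
    have "Gf n d F a b (p(i:=t)) = Gf n d F a b p" for t
      by (rule Gf_dep) (use False in simp)
    hence fe2: "(\<lambda>t. Phi n d F (p(i:=t)) j) = (\<lambda>t. (p(i:=t)) j - Gf n d F a b p)"
      unfolding fe by simp
    have "((\<lambda>t. (p(i:=t)) j - Gf n d F a b p) has_field_derivative
        ((if j = i then 1 else 0) - 0)) (at (p i))"
      by (intro DERIV_diff upd_has DERIV_const)
    hence "pderiv_at (Phi n d F) j i p = (if j = i then 1 else 0) - 0"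
      unfolding pderiv_at_def fe2 by (rule DERIV_imp_deriv)
    thus ?thesis using False unfolding p_def by simp
  qed
qed

definition Amat where "Amat n d F z1 = mat n n (\<lambda>(i,j). Gf n d F i j z1)"
definition Cmat where "Cmat n d F z1 = mat n (n*n) (\<lambda>(i,m). - pd (Gf n d F (m div n) (m mod n)) i z1)"
definition Bmat :: "nat \<Rightarrow> (nat \<Rightarrow> complex) \<Rightarrow> complex mat" where
  "Bmat n z1 = mat (n*n) n (\<lambda>(m,j). if m mod n = j then z1 (m div n) else 0)"

lemma jac_block: assumes F: "F \<in> Pnd n d" and z1: "z1 \<in> Cn n"
  shows "jac (n*(n+1)) (Phi n d F) (emb n d F z1) = four_block_mat (Amat n d F z1) (Cmat n d F z1) (Bmat n z1) (1\<^sub>m (n*n))"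
proof (rule eq_matI)
  show "dim_row (jac (n*(n+1)) (Phi n d F) (emb n d F z1)) = dim_row (four_block_mat (Amat n d F z1) (Cmat n d F z1) (Bmat n z1) (1\<^sub>m (n*n)))"
    by (simp add: jac_def Amat_def Nsimp(1))
  show "dim_col (jac (n*(n+1)) (Phi n d F) (emb n d F z1)) = dim_col (four_block_mat (Amat n d F z1) (Cmat n d F z1) (Bmat n z1) (1\<^sub>m (n*n)))"
    by (simp add: jac_def Amat_def Nsimp(1))
  fix i j assume i0: "i < dim_row (four_block_mat (Amat n d F z1) (Cmat n d F z1) (Bmat n z1) (1\<^sub>m (n*n)))"
    and j0: "j < dim_col (four_block_mat (Amat n d F z1) (Cmat n d F z1) (Bmat n z1) (1\<^sub>m (n*n)))"
  have i: "i < n + n*n" and j: "j < n + n*n" using i0 j0 by (auto simp: Amat_def)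
  have lhs: "jac (n*(n+1)) (Phi n d F) (emb n d F z1) $$ (i, j) = pderiv_at (Phi n d F) j i (emb n d F z1)"
    using i j unfolding jac_def Nsimp(1) by simp
  show "jac (n*(n+1)) (Phi n d F) (emb n d F z1) $$ (i, j) = four_block_mat (Amat n d F z1) (Cmat n d F z1) (Bmat n z1) (1\<^sub>m (n*n)) $$ (i, j)"
    unfolding lhs
  proof (cases "j < n")
    case True
    show "pderiv_at (Phi n d F) j i (emb n d F z1) = four_block_mat (Amat n d F z1) (Cmat n d F z1) (Bmat n z1) (1\<^sub>m (n*n)) $$ (i, j)"
      unfolding dPhi_low[OF F z1 True i] using i j True
      by (auto simp: Amat_def Cmat_def Bmat_def)
  next
    case False
    show "pderiv_at (Phi n d F) j i (emb n d F z1) = four_block_mat (Amat n d F z1) (Cmat n d F z1) (Bmat n z1) (1\<^sub>m (n*n)) $$ (i, j)"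
      unfolding dPhi_high[OF F z1 _ j i, OF leI[OF False]] using i j False
      by (auto simp: Amat_def Cmat_def Bmat_def)
  qed
qed

lemma ACB: assumes F: "F \<in> Pnd n d"
  shows "Amat n d F z1 - Cmat n d F z1 * Bmat n z1 = jac n F z1"
proof (rule eq_matI)
  fix i j assume i0: "i < dim_row (jac n F z1)" and j0: "j < dim_col (jac n F z1)"
  have i: "i < n" and j: "j < n" using i0 j0 by (auto simp: jac_def)
  have "(Cmat n d F z1 * Bmat n z1) $$ (i,j) = (\<Sum>m<n*n. - pd (Gf n d F (m div n) (m mod n)) i z1 * (if m mod n = j then z1 (m div n) else 0))"
    using i j by (simp add: Cmat_def Bmat_def scalar_prod_def atLeast0LessThan)
  also have "\<dots> = (\<Sum>m<n*n. if m mod n = j then - pd (Gf n d F (m div n) j) i z1 * z1 (m div n) else 0)"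
    by (intro sum.cong) auto
  also have "\<dots> = (\<Sum>k<n. - pd (Gf n d F k j) i z1 * z1 k)"
    by (rule sum_reidx[OF j])
  finally have "(Cmat n d F z1 * Bmat n z1) $$ (i,j) = - (\<Sum>k<n. z1 k * pd (Gf n d F k j) i z1)"
    by (simp add: sum_negf mult.commute)
  thus "(Amat n d F z1 - Cmat n d F z1 * Bmat n z1) $$ (i, j) = jac n F z1 $$ (i, j)"
    using i j jacF_entry[OF F i j, of z1] by (simp add: Amat_def Cmat_def Bmat_def jac_def)
qed (auto simp: Amat_def Bmat_def Cmat_def jac_def)

lemma jac_det: assumes F: "F \<in> Pnd n d" and z1: "z1 \<in> Cn n"
  shows "det (jac (n*(n+1)) (Phi n d F) (emb n d F z1)) = det (jac n F z1)"
proof -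
  have "det (jac (n*(n+1)) (Phi n d F) (emb n d F z1)) = det (Amat n d F z1 - Cmat n d F z1 * Bmat n z1)"
    unfolding jac_block[OF F z1]
    by (rule det_block) (auto simp: Amat_def Cmat_def Bmat_def)
  thus ?thesis unfolding ACB[OF F] .
qed




lemma Phi_inj: assumes F: "F \<in> Pnd n d" and F': "F' \<in> Pnd n d" and eq: "Phi n d F = Phi n d F'"
  shows "F = F'"
proof -
  have G: "Gf n d F i j x = Gf n d F' i j x" if i: "i < n" and j: "j < n" for i j x
  proof -
    let ?m = "n + (i*n + j)"
    have m: "\<not> ?m < n" "?m < n + n*n" "(?m - n) div n = i" "(?m - n) mod n = j" using idx[OF j i] by auto
    have "Phi n d F x ?m = Phi n d F' x ?m" using eq by simp
    thus ?thesis using m unfolding Phi_def by simp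
  qed
  have Z: "F (\<lambda>_. 0) j = F' (\<lambda>_. 0) j" if j: "j < n" for j
  proof -
    have "Phi n d F (\<lambda>_. 0) j = Phi n d F' (\<lambda>_. 0) j" using eq by simp
    thus ?thesis using j unfolding Phi_def by simp
  qed
  show ?thesis
  proof (intro ext)
    fix z j show "F z j = F' z j"
    proof (cases "j < n")
      case True
      have "F z j = F (\<lambda>_. 0) j + (\<Sum>i<n. z i * Gf n d F i j z)" by (rule decomp[OF F True])
      also have "\<dots> = F' (\<lambda>_. 0) j + (\<Sum>i<n. z i * Gf n d F' i j z)" using Z[OF True] G[OF _ True] by simp
      also have "\<dots> = F' z j" by (rule decomp[OF F' True, symmetric])
      finally show ?thesis .
    qed (use Pnd_zero[OF F] Pnd_zero[OF F'] in auto)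
  qed
qed

lemma emb_join: "join n z1 (gvec n d F z1) = emb n d F z1" by (simp add: emb_def)

lemma Jlin_iff: assumes F: "F \<in> Pnd n d" and d: "3 \<le> d"
  shows "Phi n d F \<in> Jlin_part (n*(n+1)) (d-1) n \<longleftrightarrow> F \<in> Jlin_nd n d"
proof -
  have det: "det (jac (n*(n+1)) (Phi n d F) (join n z1 (inv_into (Cn (n*(n+1) - n)) (Rmap n (Phi n d F) z1) (\<lambda>_. 0))))
     = det (jac n F z1)" if "z1 \<in> Cn n" for z1
    unfolding Rmap_inv[OF that] emb_join jac_det[OF F that] ..
  show ?thesis unfolding Jlin_part_def Jlin_nd_def
    using Phi_Pnd[OF F d] Rmap_Jn F det by auto
qed

lemma ip_common: "(\<And>i. i < (k::nat) \<Longrightarrow> ispoly m (f i)) \<Longrightarrow> \<exists>d. \<forall>i<k. polyfun m d (f i)"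
proof (induction k)
  case 0 then show ?case by auto
next
  case (Suc k)
  then obtain d where d: "\<forall>i<k. polyfun m d (f i)" by auto
  obtain d' where d': "polyfun m d' (f k)" using Suc.prems[of k] unfolding ispoly_def by auto
  have "\<forall>i<Suc k. polyfun m (max d d') (f i)"
  proof (intro allI impI)
    fix i assume "i < Suc k"
    thus "polyfun m (max d d') (f i)"
    proof (cases "i = k")
      case True thus ?thesis using d' by (auto intro: pf_mono_deg)
    next
      case False
      hence "polyfun m d (f i)" using d \<open>i < Suc k\<close> by auto
      thus ?thesis by (rule pf_mono_deg) auto
    qed
  qed
  thus ?case by blast
qed

lemma Pgen_allI: assumes "\<And>i. i < k \<Longrightarrow> ispoly m (\<lambda>y. H y i)" "\<And>y i. k \<le> i \<Longrightarrow> H y i = 0"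
  shows "H \<in> Pgen_all m k"
proof -
  obtain d where "\<forall>i<k. polyfun m d (\<lambda>y. H y i)" using ip_common[of k m "\<lambda>i y. H y i"] assms(1) by blast
  thus ?thesis using assms(2) unfolding Pgen_all_def Pgen_def by blast
qed

lemma Pn_comp: assumes "G \<in> Pn n" "i < n" shows "ispoly n (\<lambda>y. G y i)"
  using assms unfolding Pn_def Pgen_all_def Pgen_def ispoly_def by blast

lemma Pn_zero: assumes "G \<in> Pn n" "n \<le> i" shows "G y i = 0"
  using assms unfolding Pn_def Pgen_all_def Pgen_def by blast

lemma Jpart_iff: assumes F: "F \<in> Pnd n d" and d: "3 \<le> d"
  shows "Phi n d F \<in> Jpart (n*(n+1)) (d-1) n \<longleftrightarrow> F \<in> Jnd n d"
proof -
  let ?S = "Cn (n*(n+1)) \<inter> Phi n d F -` Cn n"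
  have S: "?S = emb n d F ` Cn n" by (rule S_char[OF F])
  have PE: "Phi n d F (emb n d F z) = F z" for z by (rule Phi_emb[OF F])
  show ?thesis
  proof
    assume J: "F \<in> Jnd n d"
    then obtain G' where bijF: "bij_betw F (Cn n) (Cn n)" and G': "G' \<in> Pn n"
      and inv: "\<And>z. z \<in> Cn n \<Longrightarrow> G' (F z) = z \<and> F (G' z) = z"
      unfolding Jnd_def Jn_def by blast
    have injS: "inj_on (Phi n d F) ?S"
    proof (rule inj_onI)
      fix x y assume "x \<in> ?S" "y \<in> ?S" and e: "Phi n d F x = Phi n d F y"
      then obtain z z' where z: "z \<in> Cn n" "x = emb n d F z" and z': "z' \<in> Cn n" "y = emb n d F z'"
        unfolding S by blast
      have "F z = F z'" using e z z' PE by simp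
      hence "z = z'" using bijF z z' unfolding bij_betw_def inj_on_def by blast
      thus "x = y" using z z' by simp
    qed
    have imS: "Phi n d F ` ?S = Cn n"
      unfolding S image_image PE using bijF unfolding bij_betw_def by simp
    have bijS: "bij_betw (Phi n d F) ?S (Cn n)" using injS imS unfolding bij_betw_def by blast
    define H where "H = (\<lambda>y. emb n d F (G' y))"
    have G'C: "G' y \<in> Cn n" for y using Pn_zero[OF G'] by (auto simp: Cn_def)
    have HP: "H \<in> Pgen_all n (n*(n+1))"
    proof (rule Pgen_allI)
      fix i assume i: "i < n*(n+1)"
      show "ispoly n (\<lambda>y. H y i)"
      proof (cases "i < n")
        case True
        thus ?thesis using Pn_comp[OF G' True] by (simp add: H_def emb_low)
      next
        case False
        have "i - n < n*n" using i False by (simp add: Nsimp)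
        hence a: "(i - n) div n < n" using idx2 by simp
        have "H y i = Gf n d F ((i - n) div n) ((i - n) mod n) (G' y)" for y
          using emb_high[of n d F "G' y" "i - n"] False \<open>i - n < n*n\<close> by (simp add: H_def gvec_def)
        moreover have "ispoly n (\<lambda>y. Gf n d F ((i - n) div n) ((i - n) mod n) (\<lambda>k. G' y k))"
          by (rule ip_comp) (use Gf_poly[OF a] Pn_comp[OF G'] in \<open>auto simp: ispoly_def\<close>)
        ultimately show ?thesis by simp
      qed
    next
      fix y i assume "n*(n+1) \<le> i" thus "H y i = 0" using emb_Cn[of n d F "G' y"] by (auto simp: H_def Cn_def)
    qed
    have Hinv: "H y = inv_into ?S (Phi n d F) y" if y: "y \<in> Cn n" for y
    proof -
      have "H y \<in> ?S" unfolding S H_def using G'C by blast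
      moreover have "Phi n d F (H y) = y" unfolding H_def PE using inv[OF y] by simp
      ultimately show ?thesis using inv_into_f_eq[OF injS] by metis
    qed
    show "Phi n d F \<in> Jpart (n*(n+1)) (d-1) n"
      unfolding Jpart_def using Phi_Pnd[OF F d] Rmap_Jn bijS HP Hinv by blast
  next
    assume J: "Phi n d F \<in> Jpart (n*(n+1)) (d-1) n"
    then obtain H where bijS: "bij_betw (Phi n d F) ?S (Cn n)" and HP: "H \<in> Pgen_all n (n*(n+1))"
      and Hinv: "\<And>y. y \<in> Cn n \<Longrightarrow> H y = inv_into ?S (Phi n d F) y"
      unfolding Jpart_def by blast
    have injS: "inj_on (Phi n d F) ?S" and imS: "Phi n d F ` ?S = Cn n" using bijS unfolding bij_betw_def by auto
    have embS: "emb n d F z \<in> ?S" if "z \<in> Cn n" for z unfolding S using that by blast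
    have injF: "inj_on F (Cn n)"
    proof (rule inj_onI)
      fix z z' assume z: "z \<in> Cn n" and z': "z' \<in> Cn n" and e: "F z = F z'"
      have "Phi n d F (emb n d F z) = Phi n d F (emb n d F z')" using e PE by simp
      hence "emb n d F z = emb n d F z'" using injS embS[OF z] embS[OF z'] unfolding inj_on_def by blast
      thus "z = z'" using emb_inj z z' by blast
    qed
    have imF: "F ` Cn n = Cn n" using imS unfolding S image_image PE .
    have bijF: "bij_betw F (Cn n) (Cn n)" using injF imF unfolding bij_betw_def by blast
    define G' where "G' = (\<lambda>y i. if i < n then H y i else 0)"
    obtain dH where dH: "H \<in> Pgen n (n*(n+1)) dH" using HP unfolding Pgen_all_def by blast
    have "n \<le> n*(n+1)" by simp
    hence G'P: "G' \<in> Pn n" using dH unfolding Pn_def Pgen_all_def Pgen_def G'_def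
      by (intro exI[of _ dH] CollectI conjI allI impI) auto
    have inv: "G' (F z) = z \<and> F (G' z) = z" if z: "z \<in> Cn n" for z
    proof
      have "H (F z) = inv_into ?S (Phi n d F) (Phi n d F (emb n d F z))"
        using Hinv[OF Pnd_Cn[OF F]] PE by simp
      also have "\<dots> = emb n d F z" by (rule inv_into_f_f[OF injS embS[OF z]])
      finally have "H (F z) = emb n d F z" .
      thus "G' (F z) = z" using z by (auto simp: G'_def emb_low Cn_def fun_eq_iff)
    next
      have zi: "z \<in> Phi n d F ` ?S" using imS z by simp
      have "H z \<in> ?S" unfolding Hinv[OF z] by (rule inv_into_into[OF zi])
      then obtain w where w: "w \<in> Cn n" "H z = emb n d F w" unfolding S by blast
      have "Phi n d F (H z) = z" unfolding Hinv[OF z] by (rule f_inv_into_f[OF zi])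
      hence Fw: "F w = z" using w PE by simp
      have "G' z = w" using w by (auto simp: G'_def emb_low Cn_def fun_eq_iff)
      thus "F (G' z) = z" using Fw by simp
    qed
    have "F \<in> Pn n" using F unfolding Pnd_def Pn_def Pgen_all_def by blast
    thus "F \<in> Jnd n d" unfolding Jnd_def Jn_def using F bijF G'P inv by blast
  qed
qed

theorem mainTheorem1:
  fixes n d :: nat
  assumes "d \<ge> 3"
  shows "\<exists>\<Phi>. inj_on \<Phi> (Pnd n d) \<and> \<Phi> ` Pnd n d \<subseteq> Pnd (n * (n + 1)) (d - 1) \<and>
            \<Phi> ` Jlin_nd n d = Jlin_part (n * (n + 1)) (d - 1) n \<inter> \<Phi> ` Pnd n d \<and>
            \<Phi> ` Jnd n d = Jpart (n * (n + 1)) (d - 1) n \<inter> \<Phi> ` Pnd n d"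
proof (intro exI conjI)
  show "inj_on (Phi n d) (Pnd n d)" using Phi_inj by (auto simp: inj_on_def)
  show "Phi n d ` Pnd n d \<subseteq> Pnd (n * (n + 1)) (d - 1)" using Phi_Pnd assms by auto
  have s1: "Jlin_nd n d \<subseteq> Pnd n d" by (auto simp: Jlin_nd_def)
  show "Phi n d ` Jlin_nd n d = Jlin_part (n * (n + 1)) (d - 1) n \<inter> Phi n d ` Pnd n d"
    using Jlin_iff[OF _ assms] s1 by blast
  have s2: "Jnd n d \<subseteq> Pnd n d" by (auto simp: Jnd_def)
  show "Phi n d ` Jnd n d = Jpart (n * (n + 1)) (d - 1) n \<inter> Phi n d ` Pnd n d"
    using Jpart_iff[OF _ assms] s2 by blast
qed


end
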